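(* Fix a complex number $q$ with $0<|q|<1$ and an integer $k\ge0$, and let $\tilde\sigma_{-k-1}(x)=\frac{(-1)^kq^{\binom{k+1}{2}}}{(x;q)_{k+1}(qx^{-1};q)_k}$. Then the meromorphic differential $\tilde\sigma_{-k-1}(x)\,dx$ on $\mathbb{CP}^1$ has simple poles at $x=q^j$ for $j=0,\pm1,\dots,\pm k$, with \[ \operatorname{Res}_{x=q^j}\tilde\sigma_{-k-1}\,dx=-\frac{(-1)^{k+j}q^{\binom{j+1}{2}+\binom{k+1}{2}}}{(q;q)_{k-j}\,(q;q)_{k+j}}, \] where $\binom{j+1}{2}=\frac{j(j+1)}{2}$ also for negative $j$. Additionally, $\tilde\sigma_{-1}(x)\,dx$ has a simple pole at $x=\infty$ with $\operatorname{Res}_{x=\infty}\tilde\sigma_{-1}\,dx=1$.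
   Context: $(a;q)_n=\prod_{j=0}^{n-1}(1-aq^j)$ denotes the $q$-Pochhammer symbol. *)

theory Defs
  imports "HOL-Complex_Analysis.Complex_Analysis"
begin

definition qpoch :: "complex \<Rightarrow> complex \<Rightarrow> nat \<Rightarrow> complex" where
  "qpoch a q n = (\<Prod>j<n. (1 - a * q ^ j))"

definition sigma_tilde :: "complex \<Rightarrow> nat \<Rightarrow> complex \<Rightarrow> complex" where
  "sigma_tilde q k x = ((-1) ^ k * q ^ (k * (k + 1) div 2)) /
       (qpoch x q (k + 1) * qpoch (q / x) q k)"

text \<open>Local expression at w = 0 of the differential f(x) dx in the chart x = 1/w
  around the point infinity: f(1/w) d(1/w) = - f(1/w) / w^2 dw.\<close>
definition diff_at_infinity :: "(complex \<Rightarrow> complex) \<Rightarrow> complex \<Rightarrow> complex" where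
  "diff_at_infinity f w = - f (inverse w) / w ^ 2"

end

theory Submission
  imports Defs
begin

lemma simple_pole_gen:
  fixes f g :: "complex \<Rightarrow> complex"
  assumes S: "open S" "c \<in> S" and g: "g holomorphic_on S" "g c \<noteq> 0"
    and eq: "\<And>w. w \<in> S \<Longrightarrow> w \<noteq> c \<Longrightarrow> f w = g w / (w - c)"
  shows "is_pole f c \<and> zorder f c = -1 \<and> residue f c = g c"
proof -
  have ev: "eventually (\<lambda>w. f w = g w / (w - c)) (at c)"
    unfolding eventually_at_topological using S eq by blast
  have "is_pole (\<lambda>w. g w / (w - c) ^ 1) c"
    by (rule is_pole_basic[OF g(1) S(1) S(2) g(2)]) simp
  hence p: "is_pole f c" using is_pole_cong[OF ev refl] by simp
  have z: "zorder f c = -1"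
    by (rule zorder_eqI[OF S g]) (simp add: eq power_int_minus divide_inverse)
  have "residue f c = residue (\<lambda>w. g w / (w - c)) c"
    by (rule residue_cong[OF ev refl])
  also have "\<dots> = g c" by (rule residue_simple[OF S g(1)])
  finally show ?thesis using p z by simp
qed

lemma powi_inj:
  fixes q :: complex
  assumes "0 < norm q" "norm q < 1" "q powi a = q powi b"
  shows "a = b"
proof (rule ccontr)
  assume ne: "a \<noteq> b"
  have q0: "q \<noteq> 0" using assms by auto
  have key: "\<And>a b. a < b \<Longrightarrow> q powi a = q powi b \<Longrightarrow> False"
  proof -
    fix a b :: int assume ab: "a < b" and e: "q powi a = q powi b"
    have "q powi b = q powi a * q powi (b - a)"
      using q0 by (simp add: power_int_add[symmetric])
    hence "q powi (b - a) = 1" using e q0 by (simp add: power_int_eq_0_iff)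
    moreover have "b - a = int (nat (b - a))" using ab by simp
    ultimately have "q ^ nat (b - a) = 1" by (metis power_int_of_nat)
    hence "norm q ^ nat (b - a) = 1" by (metis norm_one norm_power)
    moreover have "norm q ^ nat (b - a) < 1"
      using assms ab by (intro power_less_one_iff[THEN iffD2]) auto
    ultimately show False by simp
  qed
  from ne have "a < b \<or> b < a" by auto
  thus False using key assms(3) by metis
qed

lemma prod_powi: assumes "(q::complex) \<noteq> 0" shows "(\<Prod>t<(n::nat). q powi f t) = q powi (\<Sum>t<n. f t)"
  by (induction n) (simp_all add: power_int_add assms)

lemma tri_step: "(Suc k) * (Suc k + 1) div 2 = k * (k + 1) div 2 + (k + 1)"
proof -
  have "(Suc k) * (Suc k + 1) = k * (k + 1) + 2 * (k + 1)" by (simp add: algebra_simps)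
  thus ?thesis by simp
qed

lemma prod_id:
  assumes x: "x \<noteq> 0" and q: "q \<noteq> 0"
  shows "qpoch x q (k+1) * qpoch (q/x) q k * x^k =
     (-1)^(k+1) * q^(k*(k+1) div 2) * (\<Prod>m\<in>{-int k..int k}. (x - q powi m))"
proof (induction k)
  case 0
  then show ?case by (simp add: qpoch_def)
next
  case (Suc k)
  have set: "{-int (Suc k)..int (Suc k)} = insert (-int (Suc k)) (insert (int (Suc k)) {-int k..int k})"
    by auto
  have e1: "qpoch x q (Suc k + 1) = qpoch x q (k+1) * (1 - x * q^(Suc k))"
    by (simp add: qpoch_def)
  have e2: "qpoch (q/x) q (Suc k) = qpoch (q/x) q k * (1 - q/x * q^k)"
    by (simp add: qpoch_def)
  have f1: "1 - x * q^(Suc k) = -(q^(Suc k)) * (x - q powi (-int (Suc k)))"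
  proof -
    have h: "q powi (-int (Suc k)) = inverse (q^(Suc k))" by (simp only: power_int_minus power_int_of_nat)
    show ?thesis unfolding h using q by (simp add: field_simps)
  qed
  have f2: "(1 - q/x * q^k) * x = (x - q powi (int (Suc k)))"
    using x by (simp only: power_int_of_nat) (simp add: field_simps)
  have "qpoch x q (Suc k+1) * qpoch (q/x) q (Suc k) * x^(Suc k)
     = (qpoch x q (k+1) * qpoch (q/x) q k * x^k) * (1 - x * q^(Suc k)) * ((1 - q/x * q^k) * x)"
    unfolding e1 e2 power_Suc[of x k] by (simp only: mult_ac)
  also have "\<dots> = (-1)^(k+1) * q^(k*(k+1) div 2) * (\<Prod>m\<in>{-int k..int k}. (x - q powi m))
        * (-(q^(Suc k)) * (x - q powi (-int (Suc k)))) * (x - q powi (int (Suc k)))"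
    by (simp only: Suc f1 f2)
  also have "\<dots> = (-1)^(Suc k+1) * q^(Suc k*(Suc k+1) div 2) *
        (\<Prod>m\<in>{-int (Suc k)..int (Suc k)}. (x - q powi m))"
  proof -
    have P: "(\<Prod>m\<in>{-int (Suc k)..int (Suc k)}. (x - q powi m)) =
      (x - q powi (-int (Suc k))) * ((x - q powi (int (Suc k))) * (\<Prod>m\<in>{-int k..int k}. (x - q powi m)))"
      unfolding set by (subst prod.insert; simp)+
    have Q: "q^(Suc k*(Suc k+1) div 2) = q^(k*(k+1) div 2) * q^(Suc k)"
      by (subst tri_step) (simp add: power_add)
    have gen: "\<And>A B Pk E Qq::complex. (-1)^(k+1) * Qq * Pk * (-E * A) * B = (-1)^(Suc k+1) * (Qq * E) * (A * (B * Pk))"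
      by (simp add: algebra_simps)
    show ?thesis unfolding P Q by (rule gen)
  qed
  finally show ?case .
qed


lemma double_sum_int: "2 * (\<Sum>t<n. (int t)) = int n * (int n - 1)"
  by (induction n) (simp_all add: algebra_simps)

lemma sigma_form:
  assumes x: "x \<noteq> 0" and q: "q \<noteq> 0"
  shows "sigma_tilde q k x = -(x^k) / (\<Prod>m\<in>{-int k..int k}. (x - q powi m))"
proof -
  define P where "P = (\<Prod>m\<in>{-int k..int k}. (x - q powi m))"
  define A where "A = qpoch x q (k+1) * qpoch (q/x) q k"
  have id: "A * x^k = (-1)^(k+1) * q^(k*(k+1) div 2) * P"
    using prod_id[OF x q, of k] unfolding A_def P_def by simp
  have "sigma_tilde q k x = (-1)^k * q^(k*(k+1) div 2) / A"
    unfolding sigma_tilde_def A_def by simp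
  also have "\<dots> = -(x^k) / P"
  proof (cases "P = 0")
    case True
    then have "A = 0" using id x by simp
    then show ?thesis using True by simp
  next
    case False
    have A0: "A \<noteq> 0" using id False q by auto
    have eq: "(-1)^k * q^(k*(k+1) div 2) * P = -(x^k) * A" using id by (simp add: algebra_simps)
    have "(-1)^k * q^(k*(k+1) div 2) / A = (-(x^k)) / P"
      by (rule iffD2[OF frac_eq_eq[OF A0 False]]) (rule eq)
    then show ?thesis by simp
  qed
  finally show ?thesis unfolding P_def .
qed

lemma qpoch_nz:
  assumes "norm q < 1" shows "qpoch q q n \<noteq> 0"
proof -
  have "1 - q * q^t \<noteq> 0" for t
  proof
    assume "1 - q * q^t = 0"
    hence "q * q^t = 1" by simp
    hence "norm q * norm q ^ t = 1" by (metis norm_mult norm_one norm_power)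
    moreover have "norm q ^ t \<le> 1" using assms by (intro power_le_one) auto
    hence "norm q * norm q ^ t \<le> norm q" by (intro mult_left_le) auto
    ultimately show False using assms by linarith
  qed
  thus ?thesis unfolding qpoch_def by simp
qed

lemma exp_id:
  fixes j k :: int and a b :: nat and T :: int
  assumes "int a = k + j" "int b = k - j" "2 * T = int a * (int a - 1)"
  shows "j * k = j * (j + 1) div 2 + k * (k + 1) div 2 + (int a * (j - 1) - T) + j * int b"
proof -
  have "even (j * (j+1))" by simp
  then obtain Y where Y: "j * (j+1) = 2 * Y" by blast
  have "even (k * (k+1))" by simp
  then obtain Z where Z: "k * (k+1) = 2 * Z" by blast
  have hY: "j * (j + 1) div 2 = Y" "k * (k + 1) div 2 = Z" using Y Z by simp_all
  have d: "2 * (j * k) = 2 * (Y + Z + (int a * (j - 1) - T) + j * int b)"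
  proof -
    have "2 * (Y + Z + (int a * (j - 1) - T) + j * int b) = 2*Y + 2*Z + 2*(int a * (j - 1)) - 2*T + 2*(j * int b)"
      by (simp add: algebra_simps)
    also have "\<dots> = j*(j+1) + k*(k+1) + 2*((k+j)*(j-1)) - (k+j)*(k+j-1) + 2*(j*(k-j))"
      using assms Y Z by simp
    also have "\<dots> = 2 * (j * k)" by (simp add: algebra_simps)
    finally show ?thesis by simp
  qed
  have e: "j * k = Y + Z + (int a * (j - 1) - T) + j * int b" using d by simp
  show ?thesis unfolding hY by (rule e)
qed

lemma final_alg:
  fixes X E s B Qa Qb sg :: complex
  assumes "X = E * s * B" "s \<noteq> 0" "B \<noteq> 0" "Qa \<noteq> 0" "Qb \<noteq> 0" "sg * sg = 1"
  shows "-X / (sg * s * Qa * (B * Qb)) = -(sg * E) / (Qb * Qa)"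
proof -
  have sg: "sg \<noteq> 0" using assms(6) by auto
  show ?thesis using assms sg by (simp add: field_simps)
qed

theorem lemma5p1:
  fixes q :: complex and k :: nat
  assumes "0 < norm q" and "norm q < 1"
  shows "(\<forall>j::int. - int k \<le> j \<and> j \<le> int k \<longrightarrow>
            is_pole (sigma_tilde q k) (q powi j) \<and>
            zorder (sigma_tilde q k) (q powi j) = -1 \<and>
            residue (sigma_tilde q k) (q powi j) =
              - ((-1) powi (int k + j) * q powi (j * (j + 1) div 2 + int (k * (k + 1) div 2)))
                / (qpoch q q (nat (int k - j)) * qpoch q q (nat (int k + j))))
         \<and> is_pole (diff_at_infinity (sigma_tilde q 0)) 0
         \<and> zorder (diff_at_infinity (sigma_tilde q 0)) 0 = -1
         \<and> residue (diff_at_infinity (sigma_tilde q 0)) 0 = 1"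
proof -
  have q0: "q \<noteq> 0" using assms by auto
  have part1: "is_pole (sigma_tilde q k) (q powi j) \<and>
            zorder (sigma_tilde q k) (q powi j) = -1 \<and>
            residue (sigma_tilde q k) (q powi j) =
              - ((-1) powi (int k + j) * q powi (j * (j + 1) div 2 + int (k * (k + 1) div 2)))
                / (qpoch q q (nat (int k - j)) * qpoch q q (nat (int k + j)))"
    if jr: "- int k \<le> j" "j \<le> int k" for j
  proof -
    define c where "c = q powi j"
    define J where "J = {-int k..int k} - {j}"
    define S where "S = - insert 0 ((\<lambda>m. q powi m) ` J)"
    define g where "g = (\<lambda>w. -(w^k) / (\<Prod>m\<in>J. (w - q powi m)))"
    have finJ: "finite J" unfolding J_def by simp
    have c0: "c \<noteq> 0" unfolding c_def using q0 by simp
    have cnot: "c \<notin> (\<lambda>m. q powi m) ` J"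
    proof
      assume "c \<in> (\<lambda>m. q powi m) ` J"
      then obtain m where m: "m \<in> J" "q powi j = q powi m" unfolding c_def by auto
      hence "j = m" using powi_inj[OF assms] by blast
      thus False using m J_def by auto
    qed
    have openS: "open S" unfolding S_def
      by (intro open_Compl finite_imp_closed) (simp add: finJ)
    have cS: "c \<in> S" using c0 cnot unfolding S_def by auto
    have nz: "(\<Prod>m\<in>J. (w - q powi m)) \<noteq> 0" if "w \<in> S" for w
      using that finJ unfolding S_def by (auto simp: prod_zero_iff)
    have hol: "g holomorphic_on S" unfolding g_def
      by (intro holomorphic_intros) (use nz in auto)
    have gc: "g c \<noteq> 0" using nz[OF cS] c0 by (simp add: g_def)
    have jin: "j \<in> {-int k..int k}" using jr by simp
    have eq: "sigma_tilde q k w = g w / (w - c)" if "w \<in> S" "w \<noteq> c" for w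
    proof -
      have w0: "w \<noteq> 0" using that unfolding S_def by auto
      have "(\<Prod>m\<in>{-int k..int k}. (w - q powi m)) = (w - c) * (\<Prod>m\<in>J. (w - q powi m))"
        unfolding J_def c_def by (rule prod.remove[OF _ jin]) simp
      thus ?thesis using sigma_form[OF w0 q0, of k] unfolding g_def by simp
    qed
    have main: "is_pole (sigma_tilde q k) c \<and> zorder (sigma_tilde q k) c = -1 \<and> residue (sigma_tilde q k) c = g c"
      by (rule simple_pole_gen[OF openS cS hol gc eq])
    define a where "a = nat (int k + j)"
    define b where "b = nat (int k - j)"
    have ha: "int a = int k + j" and hb: "int b = int k - j" using jr unfolding a_def b_def by simp_all
    have Jsplit: "J = {-int k..<j} \<union> {j<..int k}" unfolding J_def using jr by auto
    have hi_img: "{j<..int k} = (\<lambda>t. j + 1 + int t) ` {..<b}"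
    proof (intro set_eqI iffI)
      fix m assume "m \<in> {j<..int k}"
      hence "m = j + 1 + int (nat (m - j - 1))" "nat (m - j - 1) < b" using hb by auto
      thus "m \<in> (\<lambda>t. j + 1 + int t) ` {..<b}" by blast
    qed (use hb in auto)
    have lo_img: "{-int k..<j} = (\<lambda>t. j - 1 - int t) ` {..<a}"
    proof (intro set_eqI iffI)
      fix m assume "m \<in> {-int k..<j}"
      hence "m = j - 1 - int (nat (j - 1 - m))" "nat (j - 1 - m) < a" using ha by auto
      thus "m \<in> (\<lambda>t. j - 1 - int t) ` {..<a}" by blast
    qed (use ha in auto)
    have inj1: "inj_on (\<lambda>t. j + 1 + int t) {..<b}" by (auto simp: inj_on_def)
    have inj2: "inj_on (\<lambda>t. j - 1 - int t) {..<a}" by (auto simp: inj_on_def)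
    have pw: "q powi (1 + int t) = q * q ^ t" for t
    proof -
      have "1 + int t = int (Suc t)" by simp
      thus ?thesis by (metis power_int_of_nat power_Suc)
    qed
    have prod_hi: "(\<Prod>m\<in>{j<..int k}. (c - q powi m)) = c^b * qpoch q q b"
    proof -
      have "(\<Prod>m\<in>{j<..int k}. (c - q powi m)) = (\<Prod>t<b. (c - q powi (j + 1 + int t)))"
        unfolding hi_img by (simp add: prod.reindex[OF inj1])
      also have "\<dots> = (\<Prod>t<b. c * (1 - q * q^t))"
      proof (rule prod.cong[OF refl])
        fix t
        have e: "q powi (j + (1 + int t)) = q powi j * q powi (1 + int t)"
          by (rule power_int_add) (use q0 in simp)
        have "q powi (j + 1 + int t) = c * (q * q^t)"
          unfolding c_def add.assoc e pw ..
        thus "c - q powi (j + 1 + int t) = c * (1 - q * q^t)" by (simp add: algebra_simps)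
      qed
      also have "\<dots> = c^b * qpoch q q b" by (simp add: prod.distrib qpoch_def)
      finally show ?thesis .
    qed
    define T where "T = (\<Sum>t<a. int t)"
    have prod_lo: "(\<Prod>m\<in>{-int k..<j}. (c - q powi m)) = (-1)^a * q powi (int a * (j - 1) - T) * qpoch q q a"
    proof -
      have "(\<Prod>m\<in>{-int k..<j}. (c - q powi m)) = (\<Prod>t<a. (c - q powi (j - 1 - int t)))"
        unfolding lo_img by (simp add: prod.reindex[OF inj2])
      also have "\<dots> = (\<Prod>t<a. (-1) * q powi (j - 1 - int t) * (1 - q * q^t))"
      proof (rule prod.cong[OF refl])
        fix t
        have e: "q powi (j - 1 - int t + (1 + int t)) = q powi (j - 1 - int t) * q powi (1 + int t)"
          by (rule power_int_add) (use q0 in simp)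
        have e2: "j - 1 - int t + (1 + int t) = j" by simp
        have "q powi (j - 1 - int t) * (q * q^t) = c"
          unfolding c_def using e unfolding e2 pw by simp
        thus "c - q powi (j - 1 - int t) = (-1) * q powi (j - 1 - int t) * (1 - q * q^t)"
          by (simp add: algebra_simps)
      qed
      also have "\<dots> = (-1)^a * (\<Prod>t<a. q powi (j - 1 - int t)) * qpoch q q a"
        by (simp only: prod.distrib prod_constant card_lessThan qpoch_def)
      also have "(\<Prod>t<a. q powi (j - 1 - int t)) = q powi (int a * (j - 1) - T)"
        unfolding prod_powi[OF q0] T_def by (simp add: sum_subtractf)
      finally show ?thesis .
    qed
    have gcv: "g c = -(c^k) / ((-1)^a * q powi (int a * (j - 1) - T) * qpoch q q a * (c^b * qpoch q q b))"
      unfolding g_def Jsplit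
      by (subst prod.union_disjoint) (auto simp: prod_lo prod_hi)
    have T2: "2 * T = int a * (int a - 1)" unfolding T_def by (rule double_sum_int)
    have ex: "j * int k = j * (j + 1) div 2 + int k * (int k + 1) div 2 + (int a * (j - 1) - T) + j * int b"
      by (rule exp_id[OF ha hb T2])
    have kk: "int (k * (k + 1) div 2) = int k * (int k + 1) div 2" by (simp add: zdiv_int algebra_simps)
    have ck: "c^k = q powi (j * int k)" unfolding c_def by (simp add: power_int_mult)
    have cb: "c^b = q powi (j * int b)" unfolding c_def by (simp add: power_int_mult)
    have sg: "(-1) powi (int k + j) = ((-1)^a :: complex)" by (simp add: ha[symmetric])
    have X: "q powi (j * int k) = q powi (j * (j + 1) div 2 + int (k * (k + 1) div 2)) * q powi (int a * (j - 1) - T) * q powi (j * int b)"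
      unfolding kk using q0 by (subst ex) (simp add: power_int_add)
    have "g c = - ((-1) powi (int k + j) * q powi (j * (j + 1) div 2 + int (k * (k + 1) div 2)))
                / (qpoch q q (nat (int k - j)) * qpoch q q (nat (int k + j)))"
      unfolding gcv ck cb sg a_def[symmetric] b_def[symmetric]
      by (rule final_alg[OF X]) (use q0 qpoch_nz[OF assms(2)] in \<open>auto simp: power_int_eq_0_iff\<close>)
    thus ?thesis using main unfolding c_def by simp
  qed
  have part2: "is_pole (diff_at_infinity (sigma_tilde q 0)) 0 \<and> zorder (diff_at_infinity (sigma_tilde q 0)) 0 = -1
      \<and> residue (diff_at_infinity (sigma_tilde q 0)) 0 = (\<lambda>w. 1 / (1 - w)) 0"
  proof (rule simple_pole_gen[of "-{1}"])
    show "(\<lambda>w. 1 / (1 - w)) holomorphic_on - {1}" by (intro holomorphic_intros) auto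
    fix w :: complex assume "w \<in> - {1}" "w \<noteq> 0"
    thus "diff_at_infinity (sigma_tilde q 0) w = 1 / (1 - w) / (w - 0)"
      by (simp add: diff_at_infinity_def sigma_tilde_def qpoch_def field_simps power2_eq_square)
  qed auto
  show ?thesis using part1 part2 by simp
qed

end
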